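(* Let $v>0$, $N\ge1$, and consider the coagulation process $CP(N)$ with single-coagulation rates $\psi(i,j)=(i+j)v$, started from the state $(N,0,\dots,0)$ (total dissipation). Then for all $t\ge0$, $1\le r\le N$ and $\eta=(n_1,\dots,n_N)\in\Omega_{r,N}$, $$\mathbb P(X_N^{(\rho)}(t)=\eta)=N!\,e^{-N(r-1)vt}\big(1-e^{-Nvt}\big)^{N-r}N^{-(N-r)}\prod_{k=1}^N\frac{k^{(k-1)n_k}}{(k!)^{n_k}n_k!}.$$ Equivalently, the distribution is Gibbsian with $C_N=N!$ and weights $a_{k,N}(t)=e^{-(N-k)vt}(1-e^{-Nvt})^{k-1}N^{-(k-1)}\frac{k^{k-1}}{k!}$.
   Context: $\Omega_N=\{\eta=(n_1,\dots,n_N):\sum_k kn_k=N\}$ and $\Omega_{r,N}=\{\eta\in\Omega_N:n_1+\dots+n_N=r\}$. $CP(N)$ is the continuous-time Markov chain on $\Omega_N$ in which any cluster of size $i$ and any other cluster of size $j$ merge into a cluster of size $i+j$ at rate $\psi(i,j)$; thus the transition $\eta\to\eta^{(i,j)}$ has rate $n_in_j\psi(i,j)$ for $i\ne j$ and $\frac{n_i(n_i-1)}2\psi(i,i)$ for $i=j$. $X_N^{(\rho)}(t)$ denotes the process at time $t$, $\rho$ the initial distribution (here the point mass at $(N,0,\dots,0)$). *)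

theory Defs
  imports "HOL-Analysis.Analysis"
begin

text \<open>States: eta :: nat => nat, eta k = n_k = number of clusters of size k.\<close>

definition Omega :: "nat \<Rightarrow> (nat \<Rightarrow> nat) set" where
  "Omega N = {\<eta>. (\<forall>k. \<eta> k \<noteq> 0 \<longrightarrow> 1 \<le> k \<and> k \<le> N) \<and> (\<Sum>k=1..N. k * \<eta> k) = N}"

definition Omega_r :: "nat \<Rightarrow> nat \<Rightarrow> (nat \<Rightarrow> nat) set" where
  "Omega_r r N = {\<eta> \<in> Omega N. (\<Sum>k=1..N. \<eta> k) = r}"

definition merge :: "(nat \<Rightarrow> nat) \<Rightarrow> nat \<Rightarrow> nat \<Rightarrow> (nat \<Rightarrow> nat)" where
  "merge \<eta> i j = (\<lambda>k. if k = i + j then \<eta> k + 1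
                        else if k = i \<and> k = j then \<eta> k - 2
                        else if k = i \<or> k = j then \<eta> k - 1
                        else \<eta> k)"

definition pair_rate :: "(nat \<Rightarrow> nat \<Rightarrow> real) \<Rightarrow> (nat \<Rightarrow> nat) \<Rightarrow> nat \<Rightarrow> nat \<Rightarrow> real" where
  "pair_rate \<psi> \<eta> i j =
     (if i = j then real (\<eta> i * (\<eta> i - 1)) / 2 * \<psi> i i
      else real (\<eta> i * \<eta> j) * \<psi> i j)"

definition size_pairs :: "nat \<Rightarrow> (nat \<times> nat) set" where
  "size_pairs N = {(i, j). 1 \<le> i \<and> i \<le> j \<and> i + j \<le> N}"

definition jump_rate :: "(nat \<Rightarrow> nat \<Rightarrow> real) \<Rightarrow> nat \<Rightarrow> (nat \<Rightarrow> nat) \<Rightarrow> (nat \<Rightarrow> nat) \<Rightarrow> real" where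
  "jump_rate \<psi> N \<xi> \<eta> =
     (\<Sum>(i, j)\<in>size_pairs N. if merge \<xi> i j = \<eta> then pair_rate \<psi> \<xi> i j else 0)"

definition generator :: "(nat \<Rightarrow> nat \<Rightarrow> real) \<Rightarrow> nat \<Rightarrow> (nat \<Rightarrow> nat) \<Rightarrow> (nat \<Rightarrow> nat) \<Rightarrow> real" where
  "generator \<psi> N \<xi> \<eta> =
     (if \<xi> = \<eta> then - (\<Sum>\<zeta>\<in>Omega N - {\<xi>}. jump_rate \<psi> N \<xi> \<zeta>)
      else jump_rate \<psi> N \<xi> \<eta>)"

text \<open>p t eta = P(X(t) = eta) for the chain started from the point mass rho at eta0:
  p is characterised as the solution of the Kolmogorov forward equations.\<close>
definition is_law :: "(nat \<Rightarrow> nat \<Rightarrow> real) \<Rightarrow> nat \<Rightarrow> (nat \<Rightarrow> nat) \<Rightarrow> (real \<Rightarrow> (nat \<Rightarrow> nat) \<Rightarrow> real) \<Rightarrow> bool" where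
  "is_law \<psi> N \<eta>0 p \<longleftrightarrow>
     (\<forall>\<eta>\<in>Omega N. p 0 \<eta> = (if \<eta> = \<eta>0 then 1 else 0)) \<and>
     (\<forall>\<eta>\<in>Omega N. \<forall>t\<ge>0.
        ((\<lambda>s. p s \<eta>) has_real_derivative (\<Sum>\<xi>\<in>Omega N. p t \<xi> * generator \<psi> N \<xi> \<eta>))
          (at t within {0..}))"

definition monodisperse :: "nat \<Rightarrow> nat \<Rightarrow> nat" where
  "monodisperse N = (\<lambda>k. if k = 1 then N else 0)"

end

theory Submission
  imports Defs
begin


lemma fin_diff_zero:
  "m < n \<Longrightarrow> (\<Sum>i\<le>n. (-1::real)^i * real (n choose i) * real i ^ m) = 0"
proof (induction n arbitrary: m)
  case 0 then show ?case by simp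
next
  case (Suc n)
  define D where "D l = (\<Sum>i\<le>n. (-1::real)^i * real (n choose i) * real i ^ l)" for l
  have A: "(\<Sum>i\<le>Suc n. (-1::real)^i * real (Suc n choose i) * real i ^ m)
      = 0^m + (\<Sum>i\<le>n. (-1::real)^(Suc i) * real (Suc n choose Suc i) * real (Suc i) ^ m)"
    by (subst sum.atMost_Suc_shift) simp
  have B: "(\<Sum>i\<le>n. (-1::real)^(Suc i) * real (Suc n choose Suc i) * real (Suc i) ^ m)
     = (\<Sum>i\<le>n. (-1::real)^(Suc i) * real (n choose Suc i) * real (Suc i) ^ m)
       - (\<Sum>i\<le>n. (-1::real)^i * real (n choose i) * real (Suc i) ^ m)"
    by (simp only: sum_subtractf[symmetric]) (rule sum.cong, simp_all add: algebra_simps)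
  have C: "(\<Sum>i\<le>n. (-1::real)^(Suc i) * real (n choose Suc i) * real (Suc i) ^ m) = D m - 0^m"
  proof -
    have "(\<Sum>i\<le>Suc n. (-1::real)^i * real (n choose i) * real i ^ m) = D m"
      by (simp add: D_def)
    moreover have "(\<Sum>i\<le>Suc n. (-1::real)^i * real (n choose i) * real i ^ m)
       = 0^m + (\<Sum>i\<le>n. (-1::real)^(Suc i) * real (n choose Suc i) * real (Suc i) ^ m)"
      by (subst sum.atMost_Suc_shift) simp
    ultimately show ?thesis by simp
  qed
  have E: "(\<Sum>i\<le>n. (-1::real)^i * real (n choose i) * real (Suc i) ^ m) = (\<Sum>l\<le>m. real (m choose l) * D l)"
  proof -
    have "(\<Sum>i\<le>n. (-1::real)^i * real (n choose i) * real (Suc i) ^ m)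
       = (\<Sum>i\<le>n. (-1::real)^i * real (n choose i) * (\<Sum>l\<le>m. real (m choose l) * real i ^ l))"
    proof (rule sum.cong[OF refl])
      fix i
      have "real (Suc i) ^ m = (real i + 1)^m" by (simp add: add.commute)
      also have "\<dots> = (\<Sum>l\<le>m. real (m choose l) * real i ^ l)"
        by (subst binomial_ring) simp
      finally show "(-1::real)^i * real (n choose i) * real (Suc i) ^ m = (-1::real)^i * real (n choose i) * (\<Sum>l\<le>m. real (m choose l) * real i ^ l)" by simp
    qed
    also have "\<dots> = (\<Sum>i\<le>n. \<Sum>l\<le>m. real (m choose l) * ((-1::real)^i * real (n choose i) * real i ^ l))"
      by (simp add: sum_distrib_left algebra_simps)
    also have "\<dots> = (\<Sum>l\<le>m. \<Sum>i\<le>n. real (m choose l) * ((-1::real)^i * real (n choose i) * real i ^ l))"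
      by (rule sum.swap)
    also have "\<dots> = (\<Sum>l\<le>m. real (m choose l) * D l)"
      by (simp add: D_def sum_distrib_left)
    finally show ?thesis .
  qed
  have F: "(\<Sum>l\<le>m. real (m choose l) * D l) = D m"
  proof -
    have "(\<Sum>l\<le>m. real (m choose l) * D l) = (\<Sum>l<m. real (m choose l) * D l) + D m"
      by (simp add: lessThan_Suc_atMost[symmetric])
    moreover have "(\<Sum>l<m. real (m choose l) * D l) = 0"
      using Suc.prems by (intro sum.neutral) (auto simp: D_def intro!: Suc.IH)
    ultimately show ?thesis by simp
  qed
  show ?case using A B C E F by simp
qed

definition Lab :: "nat \<Rightarrow> real \<Rightarrow> real" where
  "Lab n y = (\<Sum>i=1..n. real (n choose i) * real i ^ (i - 1) * (y + real n - real i) ^ (n - i))"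

lemma Lab_deriv:
  "(Lab m has_real_derivative
     (\<Sum>i=1..m. real (m choose i) * real i ^ (i - 1) * (real (m - i) * (y + real m - real i) ^ (m - i - 1)))) (at y)"
  unfolding Lab_def
  by (rule DERIV_sum) (auto intro!: derivative_eq_intros)

lemma Lab_deriv_eq:
  assumes "n \<ge> 1"
  shows "(\<Sum>i=1..Suc n. real (Suc n choose i) * real i ^ (i - 1) * (real (Suc n - i) * (y + real (Suc n) - real i) ^ (Suc n - i - 1)))
       = real (Suc n) * Lab n (y + 1)"
proof -
  have "(\<Sum>i=1..Suc n. real (Suc n choose i) * real i ^ (i - 1) * (real (Suc n - i) * (y + real (Suc n) - real i) ^ (Suc n - i - 1)))
     = (\<Sum>i=1..n. real (Suc n choose i) * real i ^ (i - 1) * (real (Suc n - i) * (y + real (Suc n) - real i) ^ (Suc n - i - 1)))"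
    by (simp add: sum.cl_ivl_Suc)
  also have "\<dots> = (\<Sum>i=1..n. real (Suc n) * (real (n choose i) * real i ^ (i - 1) * ((y + 1) + real n - real i) ^ (n - i)))"
  proof (rule sum.cong[OF refl])
    fix i assume i: "i \<in> {1..n}"
    have c: "real (Suc n - i) * real (Suc n choose i) = real (Suc n) * real (n choose i)"
      using binomial_absorb_comp[of "Suc n" i] by (metis diff_Suc_1 of_nat_mult)
    have e: "Suc n - i - 1 = n - i" by simp
    have f: "y + real (Suc n) - real i = (y + 1) + real n - real i" by simp
    show "real (Suc n choose i) * real i ^ (i - 1) * (real (Suc n - i) * (y + real (Suc n) - real i) ^ (Suc n - i - 1))
        = real (Suc n) * (real (n choose i) * real i ^ (i - 1) * ((y + 1) + real n - real i) ^ (n - i))"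
    proof -
      have "real (Suc n choose i) * real i ^ (i - 1) * (real (Suc n - i) * (y + real (Suc n) - real i) ^ (Suc n - i - 1))
        = (real (Suc n - i) * real (Suc n choose i)) * (real i ^ (i - 1) * ((y + 1) + real n - real i) ^ (n - i))"
        unfolding e f by (simp only: mult_ac)
      then show ?thesis unfolding c by (simp only: mult_ac)
    qed
  qed
  also have "\<dots> = real (Suc n) * Lab n (y + 1)"
    by (simp add: Lab_def sum_distrib_left)
  finally show ?thesis .
qed

lemma Lab_base:
  assumes "m \<ge> 2"
  shows "Lab m (- real m) = 0"
proof -
  have "Lab m (- real m) = (\<Sum>i=1..m. (-1)^m * ((-1::real)^i * real (m choose i) * real i ^ (m - 1)))"
    unfolding Lab_def
  proof (rule sum.cong[OF refl])
    fix i assume i: "i \<in> {1..m}"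
    have "- real m + real m - real i = (-1) * real i" by simp
    then have 1: "(- real m + real m - real i) ^ (m - i) = (-1)^(m-i) * real i ^ (m - i)"
      by (simp only: power_mult_distrib)
    have 2: "real i ^ (i - 1) * real i ^ (m - i) = real i ^ (m - 1)"
      using i by (simp add: power_add[symmetric])
    have 3: "(-1::real)^(m-i) = (-1)^m * (-1)^i"
    proof -
      have h: "(-1::real)^m = (-1)^(m-i) * (-1)^i" using i by (simp add: power_add[symmetric])
      have s: "(-1::real)^i * (-1)^i = 1" by (simp add: power_mult_distrib[symmetric])
      have "(-1::real)^m * (-1)^i = (-1)^(m-i) * ((-1)^i * (-1)^i)" unfolding h by (simp only: mult.assoc)
      then show ?thesis using s by simp
    qed
    have "real (m choose i) * real i ^ (i - 1) * (- real m + real m - real i) ^ (m - i)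
       = real (m choose i) * (-1)^(m-i) * (real i ^ (i - 1) * real i ^ (m - i))"
      unfolding 1 by (simp only: mult_ac)
    also have "\<dots> = (-1)^m * ((-1::real)^i * real (m choose i) * real i ^ (m - 1))"
      unfolding 2 3 by (simp only: mult_ac)
    finally show "real (m choose i) * real i ^ (i - 1) * (- real m + real m - real i) ^ (m - i)
       = (-1)^m * ((-1::real)^i * real (m choose i) * real i ^ (m - 1))" .
  qed
  also have "\<dots> = (-1)^m * (\<Sum>i=1..m. (-1::real)^i * real (m choose i) * real i ^ (m - 1))"
    by (simp add: sum_distrib_left)
  also have "(\<Sum>i=1..m. (-1::real)^i * real (m choose i) * real i ^ (m - 1))
      = (\<Sum>i\<le>m. (-1::real)^i * real (m choose i) * real i ^ (m - 1))"
  proof -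
    have "{..m} = insert 0 {1..m}" by auto
    then show ?thesis using assms by simp
  qed
  also have "\<dots> = 0" using assms by (intro fin_diff_zero) simp
  finally show ?thesis by simp
qed

lemma Lab_eq: "n \<ge> 1 \<Longrightarrow> Lab n y = real n * (y + real n) ^ (n - 1)"
proof (induction n arbitrary: y rule: dec_induct)
  case base then show ?case by (simp add: Lab_def)
next
  case (step n)
  let ?h = "\<lambda>y. Lab (Suc n) y - real (Suc n) * (y + real (Suc n)) ^ (Suc n - 1)"
  have d: "(?h has_real_derivative 0) (at z)" for z
  proof -
    have "(?h has_real_derivative
        (real (Suc n) * Lab n (z + 1) - real (Suc n) * (real (Suc n - 1) * (z + real (Suc n)) ^ (Suc n - 1 - 1)))) (at z)"
      using Lab_deriv[of "Suc n" z] Lab_deriv_eq[OF step.hyps(1), of z]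
      by (auto intro!: derivative_eq_intros)
    moreover have "real (Suc n) * Lab n (z + 1) - real (Suc n) * (real (Suc n - 1) * (z + real (Suc n)) ^ (Suc n - 1 - 1)) = 0"
      using step.IH[of "z+1"] step.hyps by (simp add: algebra_simps)
    ultimately show ?thesis by simp
  qed
  have "?h y = ?h (- real (Suc n))"
    by (rule DERIV_isconst_all) (use d in blast)
  also have "\<dots> = 0" using Lab_base[of "Suc n"] step.hyps by simp
  finally show ?case by simp
qed


definition aa :: "nat \<Rightarrow> real" where "aa i = real i ^ (i - 1) / fact i"

lemma forest_sum:
  assumes k: "k \<ge> 2"
  shows "(\<Sum>i=1..k-1. real (k choose i) * real i ^ (i - 1) * real (k - i) ^ (k - i - 1))
     = 2 * real (k - 1) * real k ^ (k - 2)"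
proof -
  define c where "c i = real (k choose i) * real i ^ (i - 1) * real (k - i) ^ (k - i - 1)" for i
  have S1: "(\<Sum>i=1..k-1. c i * real (k - i)) = real k * (real (k - 1) * real k ^ (k - 2))"
  proof -
    obtain n where n: "k = Suc n" "n \<ge> 1" using k by (cases k) auto
    have "(\<Sum>i=1..Suc n. real (Suc n choose i) * real i ^ (i - 1) * (real (Suc n - i) * (0 + real (Suc n) - real i) ^ (Suc n - i - 1)))
       = real (Suc n) * Lab n (0 + 1)" by (rule Lab_deriv_eq[OF n(2)])
    also have "\<dots> = real k * (real (k - 1) * real k ^ (k - 2))"
      using Lab_eq[OF n(2), of 1] n by (simp add: add.commute)
    also have "(\<Sum>i=1..Suc n. real (Suc n choose i) * real i ^ (i - 1) * (real (Suc n - i) * (0 + real (Suc n) - real i) ^ (Suc n - i - 1)))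
       = (\<Sum>i=1..k-1. c i * real (k - i))"
      unfolding n(1) c_def by (simp add: sum.cl_ivl_Suc of_nat_diff mult_ac)
    finally show ?thesis by simp
  qed
  have sym: "c (k - i) = c i" if "i \<in> {1..k-1}" for i
  proof -
    have "k choose (k - i) = k choose i" using that binomial_symmetric[of i k] by auto
    moreover have "k - (k - i) = i" using that by auto
    ultimately show ?thesis unfolding c_def by (simp add: mult_ac)
  qed
  have S2: "(\<Sum>i=1..k-1. c i * real (k - i)) = (\<Sum>i=1..k-1. c i * real i)"
  proof -
    have "(\<Sum>i=1..k-1. c i * real (k - i)) = (\<Sum>i=1..k-1. c (k - 1 + 1 - i) * real (k - (k - 1 + 1 - i)))"
      by (rule sum.atLeastAtMost_rev)
    also have "\<dots> = (\<Sum>i=1..k-1. c i * real i)"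
    proof (rule sum.cong[OF refl])
      fix i assume i: "i \<in> {1..k-1}"
      have "k - 1 + 1 - i = k - i" using k by simp
      moreover have "k - (k - i) = i" using i by auto
      ultimately show "c (k - 1 + 1 - i) * real (k - (k - 1 + 1 - i)) = c i * real i" using sym[OF i] by simp
    qed
    finally show ?thesis .
  qed
  have "real k * (\<Sum>i=1..k-1. c i) = (\<Sum>i=1..k-1. c i * real (k - i)) + (\<Sum>i=1..k-1. c i * real i)"
  proof -
    have "(\<Sum>i=1..k-1. c i * real (k - i)) + (\<Sum>i=1..k-1. c i * real i) = (\<Sum>i=1..k-1. c i * (real (k - i) + real i))"
      by (simp add: sum.distrib algebra_simps)
    also have "\<dots> = (\<Sum>i=1..k-1. c i * real k)"
      by (rule sum.cong) (auto simp: of_nat_diff)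
    finally show ?thesis by (simp add: sum_distrib_left mult.commute)
  qed
  then have "real k * (\<Sum>i=1..k-1. c i) = real k * (2 * real (k - 1) * real k ^ (k - 2))"
    using S1 S2 by simp
  then show ?thesis using k unfolding c_def by simp
qed

lemma forest_aa:
  assumes k: "k \<ge> 1"
  shows "(\<Sum>i=1..k-1. aa i * aa (k - i)) = 2 * real (k - 1) * aa k / real k"
proof (cases "k = 1")
  case True then show ?thesis by simp
next
  case False
  then have k2: "k \<ge> 2" using k by simp
  have "(\<Sum>i=1..k-1. aa i * aa (k - i)) = (\<Sum>i=1..k-1. real (k choose i) * real i ^ (i - 1) * real (k - i) ^ (k - i - 1)) / fact k"
    unfolding sum_divide_distrib
  proof (rule sum.cong[OF refl])
    fix i assume i: "i \<in> {1..k-1}"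
    then have "i \<le> k" by auto
    then show "aa i * aa (k - i) = real (k choose i) * real i ^ (i - 1) * real (k - i) ^ (k - i - 1) / fact k"
      unfolding aa_def by (simp add: binomial_fact field_simps)
  qed
  also have "\<dots> = 2 * real (k - 1) * real k ^ (k - 2) / fact k" using forest_sum[OF k2] by simp
  also have "\<dots> = 2 * real (k - 1) * aa k / real k"
  proof -
    have "k - 1 = Suc (k - 2)" using k2 by simp
    then have "real k ^ (k - 1) = real k * real k ^ (k - 2)" by simp
    then show ?thesis unfolding aa_def using k2 by (simp add: field_simps)
  qed
  finally show ?thesis .
qed


lemma ode_unique:
  fixes S :: "'a set" and G :: "'a \<Rightarrow> 'a \<Rightarrow> real" and p q :: "real \<Rightarrow> 'a \<Rightarrow> real"
  assumes fin: "finite S"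
    and init: "\<forall>\<eta>\<in>S. p 0 \<eta> = q 0 \<eta>"
    and dp: "\<forall>\<eta>\<in>S. \<forall>t\<ge>0. ((\<lambda>s. p s \<eta>) has_real_derivative (\<Sum>\<xi>\<in>S. p t \<xi> * G \<xi> \<eta>)) (at t within {0..})"
    and dq: "\<forall>\<eta>\<in>S. \<forall>t\<ge>0. ((\<lambda>s. q s \<eta>) has_real_derivative (\<Sum>\<xi>\<in>S. q t \<xi> * G \<xi> \<eta>)) (at t within {0..})"
  shows "\<forall>t\<ge>0. \<forall>\<eta>\<in>S. p t \<eta> = q t \<eta>"
proof (intro allI impI ballI)
  fix T :: real and \<eta>0 assume T: "T \<ge> 0" and \<eta>0: "\<eta>0 \<in> S"
  define d where "d s \<eta> = p s \<eta> - q s \<eta>" for s \<eta>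
  define f where "f s = (\<Sum>\<eta>\<in>S. (d s \<eta>)^2)" for s
  define M where "M = (\<Sum>\<xi>\<in>S. \<Sum>\<eta>\<in>S. \<bar>G \<xi> \<eta>\<bar>)"
  define f' where "f' s = (\<Sum>\<eta>\<in>S. 2 * d s \<eta> * (\<Sum>\<xi>\<in>S. d s \<xi> * G \<xi> \<eta>))" for s
  have dd: "((\<lambda>s. d s \<eta>) has_real_derivative (\<Sum>\<xi>\<in>S. d t \<xi> * G \<xi> \<eta>)) (at t within {0..})"
    if "\<eta> \<in> S" "t \<ge> 0" for \<eta> t
  proof -
    have "((\<lambda>s. d s \<eta>) has_real_derivative (\<Sum>\<xi>\<in>S. p t \<xi> * G \<xi> \<eta>) - (\<Sum>\<xi>\<in>S. q t \<xi> * G \<xi> \<eta>)) (at t within {0..})"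
      unfolding d_def using dp dq that by (intro DERIV_diff) auto
    moreover have "(\<Sum>\<xi>\<in>S. p t \<xi> * G \<xi> \<eta>) - (\<Sum>\<xi>\<in>S. q t \<xi> * G \<xi> \<eta>) = (\<Sum>\<xi>\<in>S. d t \<xi> * G \<xi> \<eta>)"
      unfolding d_def by (simp add: sum_subtractf[symmetric] left_diff_distrib)
    ultimately show ?thesis by simp
  qed
  have df: "(f has_real_derivative f' t) (at t within {0..})" if "t \<ge> 0" for t
    unfolding f_def f'_def
  proof (rule DERIV_sum)
    fix \<eta> assume "\<eta> \<in> S"
    from DERIV_power[OF dd[OF this that], of 2]
    show "((\<lambda>s. (d s \<eta>)^2) has_real_derivative 2 * d t \<eta> * (\<Sum>\<xi>\<in>S. d t \<xi> * G \<xi> \<eta>)) (at t within {0..})"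
      by (simp add: mult_ac)
  qed
  have fnn: "f s \<ge> 0" for s unfolding f_def by (intro sum_nonneg) auto
  have sq_le: "(d s \<eta>)^2 \<le> f s" if "\<eta> \<in> S" for s \<eta>
    unfolding f_def using fin that by (intro member_le_sum) auto
  have bound: "f' s \<le> 2 * M * f s" for s
  proof -
    have "f' s = (\<Sum>\<eta>\<in>S. \<Sum>\<xi>\<in>S. 2 * (d s \<eta> * d s \<xi>) * G \<xi> \<eta>)"
      unfolding f'_def by (simp add: sum_distrib_left mult_ac)
    also have "\<dots> \<le> (\<Sum>\<eta>\<in>S. \<Sum>\<xi>\<in>S. 2 * f s * \<bar>G \<xi> \<eta>\<bar>)"
    proof (intro sum_mono)
      fix \<eta> \<xi> assume h: "\<eta> \<in> S" "\<xi> \<in> S"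
      have "\<bar>d s \<eta> * d s \<xi>\<bar> \<le> ((d s \<eta>)^2 + (d s \<xi>)^2) / 2"
      proof -
        have "0 \<le> (\<bar>d s \<eta>\<bar> - \<bar>d s \<xi>\<bar>)^2" by simp
        then show ?thesis by (simp add: power2_eq_square abs_mult algebra_simps)
      qed
      also have "\<dots> \<le> f s" using sq_le[OF h(1), of s] sq_le[OF h(2), of s] by simp
      finally have a: "\<bar>d s \<eta> * d s \<xi>\<bar> \<le> f s" .
      have "2 * (d s \<eta> * d s \<xi>) * G \<xi> \<eta> \<le> 2 * (\<bar>d s \<eta> * d s \<xi>\<bar> * \<bar>G \<xi> \<eta>\<bar>)"
        by (metis abs_ge_self abs_mult mult.assoc mult_le_cancel_left_pos zero_less_numeral)
      also have "\<dots> \<le> 2 * (f s * \<bar>G \<xi> \<eta>\<bar>)"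
        using a by (intro mult_left_mono mult_right_mono) auto
      finally show "2 * (d s \<eta> * d s \<xi>) * G \<xi> \<eta> \<le> 2 * f s * \<bar>G \<xi> \<eta>\<bar>" by (simp add: mult_ac)
    qed
    also have "\<dots> = 2 * f s * (\<Sum>\<eta>\<in>S. \<Sum>\<xi>\<in>S. \<bar>G \<xi> \<eta>\<bar>)"
      by (simp add: sum_distrib_left)
    also have "(\<Sum>\<eta>\<in>S. \<Sum>\<xi>\<in>S. \<bar>G \<xi> \<eta>\<bar>) = M"
      unfolding M_def by (rule sum.swap)
    finally show ?thesis by (simp add: mult_ac)
  qed
  define g where "g s = f s * exp (- (2 * M) * s)" for s
  define g' where "g' s = f' s * exp (- (2 * M) * s) + f s * (exp (- (2 * M) * s) * (- (2 * M)))" for s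
  have dg: "(g has_real_derivative g' t) (at t within {0..})" if "t \<ge> 0" for t
    unfolding g_def g'_def
    using df[OF that] by (auto intro!: derivative_eq_intros simp: algebra_simps)
  have g'nonpos: "g' s \<le> 0" for s
  proof -
    have "g' s = (f' s - 2 * M * f s) * exp (- (2 * M) * s)" unfolding g'_def by (simp add: algebra_simps)
    also have "\<dots> \<le> 0" using bound[of s] by (intro mult_nonpos_nonneg) auto
    finally show ?thesis .
  qed
  have "g T \<le> g 0"
  proof (rule DERIV_nonpos_imp_decreasing_open[OF T])
    fix x assume x: "0 < x" "x < T"
    have "(g has_real_derivative g' x) (at x within {0<..})"
      using dg[of x] x by (rule_tac DERIV_subset) auto
    then have "(g has_real_derivative g' x) (at x)"
      using at_within_open[of x "{0<..}"] x by simp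
    then show "\<exists>y. (g has_real_derivative y) (at x) \<and> y \<le> 0" using g'nonpos by blast
  next
    show "continuous_on {0..T} g"
      by (rule DERIV_continuous_on[where D=g']) (rule DERIV_subset[OF dg], auto)
  qed
  moreover have "g 0 = 0" unfolding g_def f_def d_def using init by simp
  ultimately have "f T * exp (- (2 * M) * T) \<le> 0" unfolding g_def by simp
  then have "f T \<le> 0" by (simp add: mult_le_0_iff)
  then have "f T = 0" using fnn[of T] by simp
  then have "(d T \<eta>0)^2 = 0"
    using sq_le[OF \<eta>0, of T] by (simp add: antisym)
  then show "p T \<eta>0 = q T \<eta>0" unfolding d_def by simp
qed


lemma Omega_supp: "\<eta> \<in> Omega N \<Longrightarrow> \<eta> k \<noteq> 0 \<Longrightarrow> 1 \<le> k \<and> k \<le> N"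
  unfolding Omega_def by auto

lemma Omega_sum: "\<eta> \<in> Omega N \<Longrightarrow> (\<Sum>k=1..N. k * \<eta> k) = N"
  unfolding Omega_def by auto

lemma Omega_zero: "\<eta> \<in> Omega N \<Longrightarrow> (k < 1 \<or> k > N) \<Longrightarrow> \<eta> k = 0"
  using Omega_supp[of \<eta> N k] by linarith

lemma Omega_kle: assumes "\<eta> \<in> Omega N" shows "k * \<eta> k \<le> N"
proof (cases "k \<in> {1..N}")
  case True
  have "k * \<eta> k \<le> (\<Sum>k=1..N. k * \<eta> k)"
    by (rule member_le_sum) (use True in auto)
  then show ?thesis using Omega_sum[OF assms] by simp
next
  case False then show ?thesis using Omega_zero[OF assms, of k] by auto
qed

lemma Omega_le: assumes "\<eta> \<in> Omega N" shows "\<eta> k \<le> N"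
proof (cases "\<eta> k = 0")
  case False
  then have "1 \<le> k" using Omega_supp[OF assms] by auto
  then have "\<eta> k \<le> k * \<eta> k" by simp
  then show ?thesis using Omega_kle[OF assms, of k] by linarith
qed simp

lemma finite_Omega: "finite (Omega N)"
proof (rule finite_subset)
  show "Omega N \<subseteq> {f. \<forall>x. (x \<in> {..N} \<longrightarrow> f x \<in> {..N}) \<and> (x \<notin> {..N} \<longrightarrow> f x = 0)}"
  proof
    fix \<eta> assume h: "\<eta> \<in> Omega N"
    show "\<eta> \<in> {f. \<forall>x. (x \<in> {..N} \<longrightarrow> f x \<in> {..N}) \<and> (x \<notin> {..N} \<longrightarrow> f x = 0)}"
      using Omega_le[OF h] Omega_zero[OF h] by auto
  qed
  show "finite {f. \<forall>x. (x \<in> {..N} \<longrightarrow> f x \<in> {..N}) \<and> (x \<notin> {..N} \<longrightarrow> f x = (0::nat))}"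
    by (rule finite_set_of_finite_funs) auto
qed

definition cl :: "nat \<Rightarrow> (nat \<Rightarrow> nat) \<Rightarrow> nat" where
  "cl N \<eta> = (\<Sum>k=1..N. \<eta> k)"

lemma cl_le: assumes "\<eta> \<in> Omega N" shows "cl N \<eta> \<le> N"
proof -
  have "cl N \<eta> \<le> (\<Sum>k=1..N. k * \<eta> k)" unfolding cl_def by (intro sum_mono) auto
  then show ?thesis using Omega_sum[OF assms] by simp
qed

lemma cl_ge: assumes "\<eta> \<in> Omega N" "N \<ge> 1" shows "cl N \<eta> \<ge> 1"
proof (rule ccontr)
  assume "\<not> 1 \<le> cl N \<eta>"
  then have "cl N \<eta> = 0" by simp
  then have "\<forall>k\<in>{1..N}. \<eta> k = 0" unfolding cl_def by (simp add: sum_eq_0_iff)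
  then have "(\<Sum>k=1..N. k * \<eta> k) = 0" by simp
  then show False using Omega_sum[OF assms(1)] assms(2) by simp
qed


lemma delta_change:
  fixes s :: int
  assumes xi: "\<xi> \<in> Omega N" and b: "b \<ge> 1" and c: "c \<ge> 1" and bc: "b + c \<le> N"
    and z: "\<And>k. int (\<zeta> k) = int (\<xi> k) + s * ((if k = b + c then 1 else 0) - (if k = b then 1 else 0) - (if k = c then 1 else 0))"
  shows "\<zeta> \<in> Omega N" "int (cl N \<zeta>) = int (cl N \<xi>) - s"
proof -
  have inb: "b \<in> {1..N}" "c \<in> {1..N}" "b + c \<in> {1..N}" using b c bc by auto
  have "int (\<Sum>k=1..N. k * \<zeta> k) = (\<Sum>k=1..N. int k * int (\<zeta> k))" by simp
  also have "\<dots> = (\<Sum>k=1..N. int k * int (\<xi> k)) + s * ((\<Sum>k=1..N. int k * (if k = b + c then 1 else 0))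
        - (\<Sum>k=1..N. int k * (if k = b then 1 else 0)) - (\<Sum>k=1..N. int k * (if k = c then 1 else 0)))"
    unfolding z by (simp add: algebra_simps sum.distrib sum_subtractf sum_distrib_left)
  also have "\<dots> = (\<Sum>k=1..N. int k * int (\<xi> k))"
    using inb by (simp add: if_distrib cong: if_cong)
  also have "\<dots> = int N" using Omega_sum[OF xi] by (metis (no_types, lifting) of_nat_mult of_nat_sum sum.cong)
  finally have S: "(\<Sum>k=1..N. k * \<zeta> k) = N" by linarith
  have supp: "1 \<le> k \<and> k \<le> N" if "\<zeta> k \<noteq> 0" for k
  proof (cases "k = b + c \<or> k = b \<or> k = c")
    case True then show ?thesis using inb by auto
  next
    case False
    then have "\<zeta> k = \<xi> k" using z[of k] by simp
    then show ?thesis using that Omega_supp[OF xi] by auto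
  qed
  show "\<zeta> \<in> Omega N" unfolding Omega_def using S supp by auto
  have "int (cl N \<zeta>) = (\<Sum>k=1..N. int (\<zeta> k))" unfolding cl_def by simp
  also have "\<dots> = (\<Sum>k=1..N. int (\<xi> k)) + s * ((\<Sum>k=1..N. (if k = b + c then 1 else 0))
        - (\<Sum>k=1..N. (if k = b then 1 else 0)) - (\<Sum>k=1..N. (if k = c then 1 else 0)))"
    unfolding z by (simp add: sum.distrib sum_subtractf sum_distrib_left[symmetric])
  also have "\<dots> = int (cl N \<xi>) - s"
  proof -
    have d: "(\<Sum>k=1..N. (if k = a then 1 else 0)::int) = 1" if "a \<in> {1..N}" for a
      using that by simp
    show ?thesis using d[OF inb(1)] d[OF inb(2)] d[OF inb(3)] by (simp add: cl_def)
  qed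
  finally show "int (cl N \<zeta>) = int (cl N \<xi>) - s" .
qed


definition splt :: "(nat \<Rightarrow> nat) \<Rightarrow> nat \<Rightarrow> nat \<Rightarrow> nat \<Rightarrow> nat" where
  "splt \<eta> i j = (\<lambda>k. if k = i + j then \<eta> k - 1
                        else if k = i \<and> k = j then \<eta> k + 2
                        else if k = i \<or> k = j then \<eta> k + 1
                        else \<eta> k)"

definition mcond :: "(nat \<Rightarrow> nat) \<Rightarrow> nat \<Rightarrow> nat \<Rightarrow> bool" where
  "mcond \<xi> i j \<longleftrightarrow> \<xi> i \<ge> 1 \<and> \<xi> j \<ge> 1 \<and> (i = j \<longrightarrow> \<xi> i \<ge> 2)"

lemma merge_int:
  assumes "1 \<le> i" "1 \<le> j" "mcond \<xi> i j"
  shows "int (merge \<xi> i j k) = int (\<xi> k) + 1 * ((if k = i + j then 1 else 0) - (if k = i then 1 else 0) - (if k = j then 1 else 0))"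
  using assms unfolding merge_def mcond_def by auto

lemma splt_int:
  assumes "1 \<le> i" "1 \<le> j" "1 \<le> \<eta> (i + j)"
  shows "int (splt \<eta> i j k) = int (\<eta> k) + (-1) * ((if k = i + j then 1 else 0) - (if k = i then 1 else 0) - (if k = j then 1 else 0))"
  using assms unfolding splt_def by auto

lemma merge_splt:
  assumes "1 \<le> i" "1 \<le> j" "1 \<le> \<eta> (i + j)"
  shows "merge (splt \<eta> i j) i j = \<eta>"
  using assms unfolding merge_def splt_def by (auto simp: fun_eq_iff)

lemma splt_mcond:
  assumes "1 \<le> i" "1 \<le> j"
  shows "mcond (splt \<eta> i j) i j"
  using assms unfolding mcond_def splt_def by auto

lemma splt_merge:
  assumes "1 \<le> i" "1 \<le> j" "mcond \<xi> i j"
  shows "splt (merge \<xi> i j) i j = \<xi>"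
  using assms unfolding merge_def splt_def mcond_def by (auto simp: fun_eq_iff)

lemma pr_nz:
  assumes "v > 0" "pair_rate (\<lambda>i j. real (i + j) * v) \<xi> i j \<noteq> 0"
  shows "mcond \<xi> i j"
  using assms unfolding pair_rate_def mcond_def by (auto split: if_splits)

lemma finite_SP: "finite (size_pairs N)"
  by (rule finite_subset[of _ "{1..N} \<times> {1..N}"]) (auto simp: size_pairs_def)

lemma half_sum:
  fixes G :: "nat \<Rightarrow> nat \<Rightarrow> real"
  assumes sym: "\<And>i j. G i j = G j i" and van: "\<And>i j. N < i + j \<Longrightarrow> G i j = 0"
  shows "(\<Sum>(i,j)\<in>size_pairs N. if i = j then G i j / 2 else G i j) = (\<Sum>i=1..N. \<Sum>j=1..N. G i j) / 2"
proof -
  define F where "F i j = (if i = j then G i j / 2 else G i j)" for i j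
  have A: "(\<Sum>(i,j)\<in>size_pairs N. F i j) = (\<Sum>(i,j)\<in>{1..N}\<times>{1..N}. if i \<le> j then F i j else 0)"
  proof (rule sum.mono_neutral_cong_left)
    show "size_pairs N \<subseteq> {1..N}\<times>{1..N}" by (auto simp: size_pairs_def)
    show "\<forall>x\<in>{1..N}\<times>{1..N} - size_pairs N. (case x of (i, j) \<Rightarrow> if i \<le> j then F i j else 0) = 0"
    proof
      fix x assume x: "x \<in> {1..N}\<times>{1..N} - size_pairs N"
      obtain i j where ij: "x = (i,j)" by (cases x)
      show "(case x of (i, j) \<Rightarrow> if i \<le> j then F i j else 0) = 0"
      proof (cases "i \<le> j")
        case True
        then have "N < i + j" using x ij by (auto simp: size_pairs_def)
        then show ?thesis using ij van[of i j] by (auto simp: F_def)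
      qed (simp add: ij)
    qed
    show "\<And>x. x \<in> size_pairs N \<Longrightarrow> (case x of (i,j) \<Rightarrow> F i j) = (case x of (i, j) \<Rightarrow> if i \<le> j then F i j else 0)"
      by (auto simp: size_pairs_def)
  qed simp
  have B: "(\<Sum>(i,j)\<in>{1..N}\<times>{1..N}. if i \<le> j then F i j else 0) = (\<Sum>i=1..N. \<Sum>j=1..N. if i \<le> j then F i j else 0)"
    by (simp add: sum.cartesian_product)
  have C: "(\<Sum>i=1..N. \<Sum>j=1..N. G i j) = (\<Sum>i=1..N. \<Sum>j=1..N. if i \<le> j then G i j else 0) + (\<Sum>i=1..N. \<Sum>j=1..N. if j < i then G i j else 0)"
    unfolding sum.distrib[symmetric] by (intro sum.cong refl) auto
  have D: "(\<Sum>i=1..N. \<Sum>j=1..N. if j < i then G i j else 0) = (\<Sum>i=1..N. \<Sum>j=1..N. if i < j then G i j else 0)"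
  proof -
    have "(\<Sum>i=1..N. \<Sum>j=1..N. if j < i then G i j else 0) = (\<Sum>j=1..N. \<Sum>i=1..N. if j < i then G i j else 0)"
      by (rule sum.swap)
    also have "\<dots> = (\<Sum>j=1..N. \<Sum>i=1..N. if j < i then G j i else 0)"
      by (intro sum.cong refl) (simp add: sym[of _ _])
    finally show ?thesis .
  qed
  have E: "(\<Sum>i=1..N. \<Sum>j=1..N. G i j) = 2 * (\<Sum>i=1..N. \<Sum>j=1..N. if i \<le> j then F i j else 0)"
    unfolding C D sum.distrib[symmetric] sum_distrib_left
    by (intro sum.cong refl) (auto simp: F_def)
  show ?thesis using A B E unfolding F_def by simp
qed

lemma regroup:
  fixes G :: "nat \<Rightarrow> nat \<Rightarrow> real"
  assumes van: "\<And>i j. N < i + j \<Longrightarrow> G i j = 0"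
  shows "(\<Sum>i=1..N. \<Sum>j=1..N. G i j) = (\<Sum>k=1..N. \<Sum>i=1..k-1. G i (k - i))"
proof -
  define T where "T = {(i,j). 1 \<le> i \<and> 1 \<le> j \<and> i + j \<le> N}"
  have "(\<Sum>i=1..N. \<Sum>j=1..N. G i j) = (\<Sum>(i,j)\<in>{1..N}\<times>{1..N}. G i j)"
    by (simp add: sum.cartesian_product)
  also have "\<dots> = (\<Sum>(i,j)\<in>T. G i j)"
  proof (rule sum.mono_neutral_right)
    show "\<forall>x\<in>{1..N}\<times>{1..N} - T. (case x of (i,j) \<Rightarrow> G i j) = 0"
      using van by (auto simp: T_def) (meson not_le)
  qed (auto simp: T_def)
  also have "\<dots> = (\<Sum>(k,i)\<in>Sigma {1..N} (\<lambda>k. {1..k-1}). G i (k - i))"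
    by (rule sum.reindex_bij_witness[where j="\<lambda>(i,j). (i + j, i)" and i="\<lambda>(k,i). (i, k - i)"])
       (auto simp: T_def)
  also have "\<dots> = (\<Sum>k=1..N. \<Sum>i=1..k-1. G i (k - i))"
    by (simp add: sum.Sigma)
  finally show ?thesis .
qed

lemma RS: "\<xi> \<in> Omega N \<Longrightarrow> (\<Sum>k=1..N. real k * real (\<xi> k)) = real N"
  using Omega_sum[of \<xi> N] by (metis (no_types, lifting) of_nat_mult of_nat_sum sum.cong)

lemma RC: "(\<Sum>k=1..N. real (\<xi> k)) = real (cl N \<xi>)"
  unfolding cl_def by simp

lemma two_le:
  assumes xi: "\<xi> \<in> Omega N" and "i \<noteq> j" "i \<in> {1..N}" "j \<in> {1..N}"
  shows "i * \<xi> i + j * \<xi> j \<le> N"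
proof -
  have "(\<Sum>k\<in>{i,j}. k * \<xi> k) \<le> (\<Sum>k=1..N. k * \<xi> k)"
    by (rule sum_mono2) (use assms in auto)
  then show ?thesis using Omega_sum[OF xi] assms by simp
qed

lemma real_nn1: "real (n * (n - 1)) = real n * real n - real n"
  by (cases n) (auto simp: algebra_simps)

lemma out_rate:
  assumes v: "v > 0" and xi: "\<xi> \<in> Omega N"
  shows "(\<Sum>\<zeta>\<in>Omega N - {\<xi>}. jump_rate (\<lambda>i j. real (i + j) * v) N \<xi> \<zeta>) = v * real N * (real (cl N \<xi>) - 1)"
proof -
  let ?\<psi> = "\<lambda>i j. real (i + j) * v"
  have 1: "(\<Sum>\<zeta>\<in>Omega N - {\<xi>}. jump_rate ?\<psi> N \<xi> \<zeta>) = (\<Sum>(i,j)\<in>size_pairs N. pair_rate ?\<psi> \<xi> i j)"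
  proof -
    have "(\<Sum>\<zeta>\<in>Omega N - {\<xi>}. jump_rate ?\<psi> N \<xi> \<zeta>)
       = (\<Sum>p\<in>size_pairs N. \<Sum>\<zeta>\<in>Omega N - {\<xi>}. (case p of (i,j) \<Rightarrow> if merge \<xi> i j = \<zeta> then pair_rate ?\<psi> \<xi> i j else 0))"
      unfolding jump_rate_def by (rule sum.swap)
    also have "\<dots> = (\<Sum>p\<in>size_pairs N. case p of (i,j) \<Rightarrow> pair_rate ?\<psi> \<xi> i j)"
    proof (rule sum.cong[OF refl])
      fix p assume p: "p \<in> size_pairs N"
      obtain i j where ij: "p = (i,j)" by (cases p)
      have ij1: "1 \<le> i" "1 \<le> j" "i + j \<le> N" using p ij by (auto simp: size_pairs_def)
      have "(\<Sum>\<zeta>\<in>Omega N - {\<xi>}. if merge \<xi> i j = \<zeta> then pair_rate ?\<psi> \<xi> i j else 0)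
          = (if merge \<xi> i j \<in> Omega N - {\<xi>} then pair_rate ?\<psi> \<xi> i j else 0)"
        by (rule sum.delta') (simp add: finite_Omega)
      also have "\<dots> = pair_rate ?\<psi> \<xi> i j"
      proof (cases "pair_rate ?\<psi> \<xi> i j = 0")
        case False
        then have mc: "mcond \<xi> i j" by (rule pr_nz[OF v])
        note dc = delta_change[OF xi ij1, of "merge \<xi> i j" 1, OF merge_int[OF ij1(1,2) mc]]
        have "merge \<xi> i j \<noteq> \<xi>" using dc(2) by auto
        then show ?thesis using dc(1) by simp
      qed simp
      finally show "(\<Sum>\<zeta>\<in>Omega N - {\<xi>}. case p of (i,j) \<Rightarrow> if merge \<xi> i j = \<zeta> then pair_rate ?\<psi> \<xi> i j else 0)
          = (case p of (i,j) \<Rightarrow> pair_rate ?\<psi> \<xi> i j)" using ij by simp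
    qed
    finally show ?thesis by simp
  qed
  define G where "G i j = v * (real (\<xi> i * \<xi> j) * real (i + j) - (if i = j then 2 * real i * real (\<xi> i) else 0))" for i j
  have 2: "(\<Sum>(i,j)\<in>size_pairs N. pair_rate ?\<psi> \<xi> i j) = (\<Sum>(i,j)\<in>size_pairs N. if i = j then G i j / 2 else G i j)"
    by (intro sum.cong refl) (auto simp: pair_rate_def G_def real_nn1 algebra_simps)
  have sym: "G i j = G j i" for i j unfolding G_def by (simp add: mult.commute add.commute)
  have van: "G i j = 0" if "N < i + j" for i j
  proof (cases "i = j")
    case True
    have "i * \<xi> i \<le> N" by (rule Omega_kle[OF xi])
    then have "\<xi> i \<le> 1" using that True by (cases "\<xi> i") (auto, (cases "\<xi> i - 1"; simp))
    then have "\<xi> i = 0 \<or> \<xi> i = 1" by auto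
    then show ?thesis unfolding G_def using True by auto
  next
    case False
    have "\<xi> i = 0 \<or> \<xi> j = 0"
    proof (rule ccontr)
      assume "\<not> ?thesis"
      then have nz: "\<xi> i \<noteq> 0" "\<xi> j \<noteq> 0" by auto
      then have "i \<in> {1..N}" "j \<in> {1..N}" using Omega_supp[OF xi] by auto
      from two_le[OF xi False this] have "i * \<xi> i + j * \<xi> j \<le> N" .
      moreover have "i \<le> i * \<xi> i" "j \<le> j * \<xi> j" using nz by auto
      ultimately show False using that by linarith
    qed
    then show ?thesis unfolding G_def using False by auto
  qed
  have 3: "(\<Sum>(i,j)\<in>size_pairs N. if i = j then G i j / 2 else G i j) = (\<Sum>i=1..N. \<Sum>j=1..N. G i j) / 2"
    by (rule half_sum[OF sym van]) simp
  have 4: "(\<Sum>i=1..N. \<Sum>j=1..N. G i j) = v * (2 * real N * real (cl N \<xi>) - 2 * real N)"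
  proof -
    have a: "(\<Sum>i=1..N. \<Sum>j=1..N. real (\<xi> i * \<xi> j) * real (i + j))
        = (\<Sum>i=1..N. real i * real (\<xi> i)) * (\<Sum>j=1..N. real (\<xi> j)) + (\<Sum>i=1..N. real (\<xi> i)) * (\<Sum>j=1..N. real j * real (\<xi> j))"
    proof -
      have "(\<Sum>i=1..N. \<Sum>j=1..N. real (\<xi> i * \<xi> j) * real (i + j))
          = (\<Sum>i=1..N. \<Sum>j=1..N. (real i * real (\<xi> i)) * real (\<xi> j) + real (\<xi> i) * (real j * real (\<xi> j)))"
        by (intro sum.cong refl) (simp add: algebra_simps)
      also have "\<dots> = (\<Sum>i=1..N. \<Sum>j=1..N. (real i * real (\<xi> i)) * real (\<xi> j)) + (\<Sum>i=1..N. \<Sum>j=1..N. real (\<xi> i) * (real j * real (\<xi> j)))"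
        by (simp add: sum.distrib)
      finally show ?thesis by (simp add: sum_product)
    qed
    have b: "(\<Sum>i=1..N. \<Sum>j=1..N. (if i = j then 2 * real i * real (\<xi> i) else 0)) = 2 * (\<Sum>i=1..N. real i * real (\<xi> i))"
      by (simp add: sum_distrib_left mult.assoc)
    have "(\<Sum>i=1..N. \<Sum>j=1..N. G i j) = v * ((\<Sum>i=1..N. \<Sum>j=1..N. real (\<xi> i * \<xi> j) * real (i + j))
          - (\<Sum>i=1..N. \<Sum>j=1..N. (if i = j then 2 * real i * real (\<xi> i) else 0)))"
      unfolding G_def sum_distrib_left[symmetric] sum_subtractf by (rule refl)
    also have "\<dots> = v * (2 * real N * real (cl N \<xi>) - 2 * real N)"
      unfolding a b RS[OF xi] RC by simp
    finally show ?thesis .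
  qed
  show ?thesis using 1 2 3 4 by (simp add: algebra_simps)
qed


definition w :: "(nat \<Rightarrow> nat) \<Rightarrow> nat \<Rightarrow> real" where
  "w \<eta> m = aa m ^ \<eta> m / fact (\<eta> m)"

definition W :: "nat \<Rightarrow> (nat \<Rightarrow> nat) \<Rightarrow> real" where
  "W N \<eta> = (\<Prod>m=1..N. w \<eta> m)"

lemma aa_pos: "m \<ge> 1 \<Longrightarrow> aa m > 0"
  unfolding aa_def by simp

lemma w_pos: "m \<ge> 1 \<Longrightarrow> w \<eta> m > 0"
  unfolding w_def using aa_pos by simp

lemma W_pos: "W N \<eta> > 0"
  unfolding W_def by (rule prod_pos) (auto intro: w_pos)

lemma prod_change:
  fixes f g :: "nat \<Rightarrow> real"
  assumes "finite A" "S \<subseteq> A" "\<forall>m\<in>A - S. f m = g m"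
  shows "prod f A * prod g S = prod g A * prod f S"
proof -
  have "prod f A = prod f (A - S) * prod f S" by (rule prod.subset_diff[OF assms(2,1)])
  moreover have "prod g A = prod g (A - S) * prod g S" by (rule prod.subset_diff[OF assms(2,1)])
  moreover have "prod f (A - S) = prod g (A - S)" using assms(3) by (intro prod.cong) auto
  ultimately show ?thesis by (simp add: mult_ac)
qed

lemma w_up1: assumes "\<xi> m = \<eta> m + 1" shows "w \<xi> m = w \<eta> m * aa m / (real (\<eta> m) + 1)"
  unfolding w_def assms by (simp add: field_simps)

lemma w_up2: assumes "\<xi> m = \<eta> m + 2" shows "w \<xi> m = w \<eta> m * aa m ^ 2 / ((real (\<eta> m) + 1) * (real (\<eta> m) + 2))"
  unfolding w_def assms by (simp add: field_simps power2_eq_square)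

lemma w_down: assumes "\<xi> m = \<eta> m - 1" "\<eta> m \<ge> 1" "m \<ge> 1"
  shows "w \<xi> m = w \<eta> m * real (\<eta> m) / aa m"
proof -
  have e: "\<eta> m = \<xi> m + 1" using assms by simp
  have "w \<eta> m = w \<xi> m * aa m / (real (\<xi> m) + 1)" by (rule w_up1) (use e in simp)
  also have "real (\<xi> m) + 1 = real (\<eta> m)" using e by simp
  finally have e2: "w \<eta> m = w \<xi> m * aa m / real (\<eta> m)" .
  have "real (\<eta> m) > 0" "aa m > 0" using assms aa_pos by auto
  then show ?thesis using e2 by (simp add: field_simps)
qed

lemma W_splt_ne:
  assumes ij: "1 \<le> i" "1 \<le> j" "i + j \<le> N" "i \<noteq> j" and k: "1 \<le> \<eta> (i + j)"
  shows "W N (splt \<eta> i j) = W N \<eta> * (aa i / (real (\<eta> i) + 1)) * (aa j / (real (\<eta> j) + 1)) * (real (\<eta> (i + j)) / aa (i + j))"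
proof -
  let ?\<xi> = "splt \<eta> i j"
  have S: "{i, j, i + j} \<subseteq> {1..N}" using ij by auto
  have P: "W N ?\<xi> * prod (w \<eta>) {i, j, i + j} = W N \<eta> * prod (w ?\<xi>) {i, j, i + j}"
    unfolding W_def by (rule prod_change[OF _ S]) (auto simp: w_def splt_def)
  have d: "i \<noteq> i + j" "j \<noteq> i + j" using ij by auto
  have pe: "prod (w \<eta>) {i, j, i + j} = w \<eta> i * w \<eta> j * w \<eta> (i + j)"
    using ij d by simp
  have px: "prod (w ?\<xi>) {i, j, i + j} = w ?\<xi> i * w ?\<xi> j * w ?\<xi> (i + j)"
    using ij d by simp
  have xi: "w ?\<xi> i = w \<eta> i * aa i / (real (\<eta> i) + 1)" by (rule w_up1) (use ij in \<open>auto simp: splt_def\<close>)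
  have xj: "w ?\<xi> j = w \<eta> j * aa j / (real (\<eta> j) + 1)" by (rule w_up1) (use ij in \<open>auto simp: splt_def\<close>)
  have xk: "w ?\<xi> (i + j) = w \<eta> (i + j) * real (\<eta> (i + j)) / aa (i + j)"
    by (rule w_down) (use ij k in \<open>auto simp: splt_def\<close>)
  have pos: "w \<eta> i > 0" "w \<eta> j > 0" "w \<eta> (i + j) > 0" "aa (i + j) > 0"
    using ij by (auto intro!: w_pos aa_pos)
  define X where "X = w \<eta> i * w \<eta> j * w \<eta> (i + j)"
  define R where "R = (aa i / (real (\<eta> i) + 1)) * (aa j / (real (\<eta> j) + 1)) * (real (\<eta> (i + j)) / aa (i + j))"
  have Y: "w ?\<xi> i * w ?\<xi> j * w ?\<xi> (i + j) = X * R"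
    unfolding xi xj xk X_def R_def times_divide_eq_right[symmetric] by (simp only: mult_ac)
  have "W N ?\<xi> * X = (W N \<eta> * R) * X" using P unfolding pe px Y X_def by (simp only: mult_ac)
  moreover have "X \<noteq> 0" unfolding X_def using pos by simp
  ultimately have "W N ?\<xi> = W N \<eta> * R" by simp
  then show ?thesis unfolding R_def by (simp only: mult.assoc)
qed

lemma W_splt_eq:
  assumes ij: "1 \<le> i" "i + i \<le> N" and k: "1 \<le> \<eta> (i + i)"
  shows "W N (splt \<eta> i i) = W N \<eta> * (aa i ^ 2 / ((real (\<eta> i) + 1) * (real (\<eta> i) + 2))) * (real (\<eta> (i + i)) / aa (i + i))"
proof -
  let ?\<xi> = "splt \<eta> i i"
  have S: "{i, i + i} \<subseteq> {1..N}" using ij by auto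
  have P: "W N ?\<xi> * prod (w \<eta>) {i, i + i} = W N \<eta> * prod (w ?\<xi>) {i, i + i}"
    unfolding W_def by (rule prod_change[OF _ S]) (auto simp: w_def splt_def)
  have d: "i \<noteq> i + i" using ij by auto
  have pe: "prod (w \<eta>) {i, i + i} = w \<eta> i * w \<eta> (i + i)" using d by simp
  have px: "prod (w ?\<xi>) {i, i + i} = w ?\<xi> i * w ?\<xi> (i + i)" using d by simp
  have xi: "w ?\<xi> i = w \<eta> i * aa i ^ 2 / ((real (\<eta> i) + 1) * (real (\<eta> i) + 2))"
    by (rule w_up2) (use ij in \<open>auto simp: splt_def\<close>)
  have xk: "w ?\<xi> (i + i) = w \<eta> (i + i) * real (\<eta> (i + i)) / aa (i + i)"
    by (rule w_down) (use ij k in \<open>auto simp: splt_def\<close>)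
  have pos: "w \<eta> i > 0" "w \<eta> (i + i) > 0" "aa (i + i) > 0"
    using ij by (auto intro!: w_pos aa_pos)
  define X where "X = w \<eta> i * w \<eta> (i + i)"
  define R where "R = (aa i ^ 2 / ((real (\<eta> i) + 1) * (real (\<eta> i) + 2))) * (real (\<eta> (i + i)) / aa (i + i))"
  have Y: "w ?\<xi> i * w ?\<xi> (i + i) = X * R"
    unfolding xi xk X_def R_def times_divide_eq_right[symmetric] by (simp only: mult_ac)
  have "W N ?\<xi> * X = (W N \<eta> * R) * X" using P unfolding pe px Y X_def by (simp only: mult_ac)
  moreover have "X \<noteq> 0" unfolding X_def using pos by simp
  ultimately have "W N ?\<xi> = W N \<eta> * R" by simp
  then show ?thesis unfolding R_def by (simp only: mult.assoc)
qed


definition Gf :: "real \<Rightarrow> nat \<Rightarrow> (nat \<Rightarrow> nat) \<Rightarrow> nat \<Rightarrow> nat \<Rightarrow> real" where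
  "Gf v N \<eta> i j = v * real (i + j) * real (\<eta> (i + j)) * aa i * aa j / aa (i + j) * W N \<eta>"

lemma term_eq:
  assumes ij: "(i, j) \<in> size_pairs N" and k: "1 \<le> \<eta> (i + j)"
  shows "pair_rate (\<lambda>i j. real (i + j) * v) (splt \<eta> i j) i j * W N (splt \<eta> i j)
       = (if i = j then Gf v N \<eta> i j / 2 else Gf v N \<eta> i j)"
proof (cases "i = j")
  case True
  have ij': "1 \<le> i" "i + i \<le> N" using ij True by (auto simp: size_pairs_def)
  have s: "splt \<eta> i i i = \<eta> i + 2" using ij' by (simp add: splt_def)
  define D where "D = (real (\<eta> i) + 1) * (real (\<eta> i) + 2)"
  have Dnz: "D \<noteq> 0" unfolding D_def by (simp add: add_pos_pos)
  have p: "pair_rate (\<lambda>i j. real (i + j) * v) (splt \<eta> i i) i i = D / 2 * (real (i + i) * v)"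
    unfolding pair_rate_def s D_def by (simp add: algebra_simps)
  have a: "aa (i + i) > 0" using ij' by (intro aa_pos) simp
  have k': "1 \<le> \<eta> (i + i)" using k True by simp
  have Wq: "W N (splt \<eta> i i) = W N \<eta> * (aa i ^ 2 / D) * (real (\<eta> (i + i)) / aa (i + i))"
    unfolding D_def by (rule W_splt_eq[of i N \<eta>, OF ij' k'])
  show ?thesis unfolding True[symmetric] p Wq Gf_def using a Dnz
    by (simp add: field_simps power2_eq_square)
next
  case False
  have ij': "1 \<le> i" "1 \<le> j" "i + j \<le> N" using ij by (auto simp: size_pairs_def)
  have s: "splt \<eta> i j i = \<eta> i + 1" "splt \<eta> i j j = \<eta> j + 1" using ij' False by (auto simp: splt_def)
  define Di where "Di = real (\<eta> i) + 1"
  define Dj where "Dj = real (\<eta> j) + 1"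
  have Dnz: "Di \<noteq> 0" "Dj \<noteq> 0" unfolding Di_def Dj_def by (simp_all add: add_pos_pos)
  have p: "pair_rate (\<lambda>i j. real (i + j) * v) (splt \<eta> i j) i j = Di * Dj * (real (i + j) * v)"
    unfolding pair_rate_def s Di_def Dj_def using False by (simp add: algebra_simps)
  have a: "aa (i + j) > 0" using ij' by (intro aa_pos) simp
  have Wq: "W N (splt \<eta> i j) = W N \<eta> * (aa i / Di) * (aa j / Dj) * (real (\<eta> (i + j)) / aa (i + j))"
    unfolding Di_def Dj_def by (rule W_splt_ne[of i j N \<eta>, OF ij' False k])
  show ?thesis unfolding p Wq Gf_def using a False Dnz
    by (simp add: field_simps)
qed

lemma core:
  assumes eta: "\<eta> \<in> Omega N"
  shows "(\<Sum>(i,j)\<in>size_pairs N. if 1 \<le> \<eta> (i + j) then pair_rate (\<lambda>i j. real (i + j) * v) (splt \<eta> i j) i j * W N (splt \<eta> i j) else 0)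
     = v * (real N - real (cl N \<eta>)) * W N \<eta>"
proof -
  let ?G = "Gf v N \<eta>"
  have van: "?G i j = 0" if "N < i + j" for i j
    using Omega_zero[OF eta, of "i + j"] that by (simp add: Gf_def)
  have sym: "?G i j = ?G j i" for i j unfolding Gf_def by (simp add: add.commute mult_ac)
  have "(\<Sum>(i,j)\<in>size_pairs N. if 1 \<le> \<eta> (i + j) then pair_rate (\<lambda>i j. real (i + j) * v) (splt \<eta> i j) i j * W N (splt \<eta> i j) else 0)
      = (\<Sum>(i,j)\<in>size_pairs N. if i = j then ?G i j / 2 else ?G i j)"
  proof (rule sum.cong[OF refl], clarify)
    fix i j assume ij: "(i, j) \<in> size_pairs N"
    show "(if 1 \<le> \<eta> (i + j) then pair_rate (\<lambda>i j. real (i + j) * v) (splt \<eta> i j) i j * W N (splt \<eta> i j) else 0)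
        = (if i = j then ?G i j / 2 else ?G i j)"
    proof (cases "1 \<le> \<eta> (i + j)")
      case True then show ?thesis using term_eq[of i j N \<eta> v] ij True by simp
    next
      case False then have "\<eta> (i + j) = 0" by simp
      then have g: "Gf v N \<eta> i j = 0" by (simp add: Gf_def)
      show ?thesis using False by (simp only: g) simp
    qed
  qed
  also have "\<dots> = (\<Sum>i=1..N. \<Sum>j=1..N. ?G i j) / 2"
    by (rule half_sum[OF sym van]) simp
  also have "(\<Sum>i=1..N. \<Sum>j=1..N. ?G i j) = (\<Sum>k=1..N. \<Sum>i=1..k-1. ?G i (k - i))"
    by (rule regroup[OF van]) simp
  also have "\<dots> = (\<Sum>k=1..N. 2 * v * W N \<eta> * (real k * real (\<eta> k) - real (\<eta> k)))"
  proof (rule sum.cong[OF refl])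
    fix k assume k: "k \<in> {1..N}"
    have ak: "aa k > 0" using k by (intro aa_pos) simp
    have "(\<Sum>i=1..k-1. ?G i (k - i)) = (\<Sum>i=1..k-1. (v * real k * real (\<eta> k) / aa k * W N \<eta>) * (aa i * aa (k - i)))"
      by (intro sum.cong refl) (auto simp: Gf_def)
    also have "\<dots> = (v * real k * real (\<eta> k) / aa k * W N \<eta>) * (\<Sum>i=1..k-1. aa i * aa (k - i))"
      by (simp only: sum_distrib_left)
    also have "\<dots> = (v * real k * real (\<eta> k) / aa k * W N \<eta>) * (2 * real (k - 1) * aa k / real k)"
      using forest_aa[of k] k by simp
    also have "\<dots> = 2 * v * W N \<eta> * (real k * real (\<eta> k) - real (\<eta> k))"
      using ak k by (simp add: field_simps of_nat_diff)
    finally show "(\<Sum>i=1..k-1. ?G i (k - i)) = 2 * v * W N \<eta> * (real k * real (\<eta> k) - real (\<eta> k))" .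
  qed
  also have "\<dots> = 2 * v * W N \<eta> * (real N - real (cl N \<eta>))"
    by (simp only: sum_distrib_left[symmetric] sum_subtractf RS[OF eta] RC)
  finally show ?thesis by simp
qed


definition qf :: "real \<Rightarrow> nat \<Rightarrow> real \<Rightarrow> (nat \<Rightarrow> nat) \<Rightarrow> real" where
  "qf v N t \<eta> = fact N * exp (- real N * real (cl N \<eta> - 1) * v * t)
      * (1 - exp (- real N * v * t)) ^ (N - cl N \<eta>) / real N ^ (N - cl N \<eta>) * W N \<eta>"

lemma in_sum:
  assumes v: "v > 0" and eta: "\<eta> \<in> Omega N" and ij: "(i, j) \<in> size_pairs N"
  shows "(\<Sum>\<xi>\<in>Omega N - {\<eta>}. f \<xi> * (if merge \<xi> i j = \<eta> then pair_rate (\<lambda>i j. real (i + j) * v) \<xi> i j else 0))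
       = (if 1 \<le> \<eta> (i + j) then f (splt \<eta> i j) * pair_rate (\<lambda>i j. real (i + j) * v) (splt \<eta> i j) i j else 0)"
proof -
  let ?pr = "pair_rate (\<lambda>i j. real (i + j) * v)"
  have ij1: "1 \<le> i" "1 \<le> j" "i + j \<le> N" using ij by (auto simp: size_pairs_def)
  have pw: "f \<xi> * (if merge \<xi> i j = \<eta> then ?pr \<xi> i j else 0)
       = (if \<xi> = splt \<eta> i j then (if 1 \<le> \<eta> (i + j) then f \<xi> * ?pr \<xi> i j else 0) else 0)" for \<xi>
  proof (cases "merge \<xi> i j = \<eta>")
    case True
    show ?thesis
    proof (cases "?pr \<xi> i j = 0")
      case False
      then have mc: "mcond \<xi> i j" by (rule pr_nz[OF v])
      have "splt \<eta> i j = \<xi>" using splt_merge[OF ij1(1,2) mc] True by simp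
      moreover have "1 \<le> \<eta> (i + j)" using True by (auto simp: merge_def)
      ultimately show ?thesis using True by auto
    qed (use True in auto)
  next
    case False
    have "\<not> (\<xi> = splt \<eta> i j \<and> 1 \<le> \<eta> (i + j))"
      using merge_splt[OF ij1(1,2)] False by auto
    then show ?thesis using False by auto
  qed
  have "(\<Sum>\<xi>\<in>Omega N - {\<eta>}. f \<xi> * (if merge \<xi> i j = \<eta> then ?pr \<xi> i j else 0))
     = (\<Sum>\<xi>\<in>Omega N - {\<eta>}. if \<xi> = splt \<eta> i j then (if 1 \<le> \<eta> (i + j) then f \<xi> * ?pr \<xi> i j else 0) else 0)"
    using pw by simp
  also have "\<dots> = (if splt \<eta> i j \<in> Omega N - {\<eta>} then (if 1 \<le> \<eta> (i + j) then f (splt \<eta> i j) * ?pr (splt \<eta> i j) i j else 0) else 0)"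
    by (rule sum.delta) (simp add: finite_Omega)
  also have "\<dots> = (if 1 \<le> \<eta> (i + j) then f (splt \<eta> i j) * ?pr (splt \<eta> i j) i j else 0)"
  proof (cases "1 \<le> \<eta> (i + j)")
    case True
    note dc = delta_change[OF eta ij1, of "splt \<eta> i j" "-1", OF splt_int[of i j \<eta>, OF ij1(1,2) True]]
    have "splt \<eta> i j \<noteq> \<eta>" using dc(2) by auto
    then show ?thesis using dc(1) True by simp
  qed simp
  finally show ?thesis .
qed

lemma gen_sum:
  assumes v: "v > 0" and eta: "\<eta> \<in> Omega N"
  shows "(\<Sum>\<xi>\<in>Omega N. f \<xi> * generator (\<lambda>i j. real (i + j) * v) N \<xi> \<eta>)
     = f \<eta> * (- (v * real N * (real (cl N \<eta>) - 1)))
       + (\<Sum>(i,j)\<in>size_pairs N. if 1 \<le> \<eta> (i + j) then f (splt \<eta> i j) * pair_rate (\<lambda>i j. real (i + j) * v) (splt \<eta> i j) i j else 0)"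
proof -
  let ?\<psi> = "\<lambda>i j. real (i + j) * v"
  have "(\<Sum>\<xi>\<in>Omega N. f \<xi> * generator ?\<psi> N \<xi> \<eta>) = f \<eta> * generator ?\<psi> N \<eta> \<eta> + (\<Sum>\<xi>\<in>Omega N - {\<eta>}. f \<xi> * generator ?\<psi> N \<xi> \<eta>)"
    by (rule sum.remove[OF finite_Omega eta])
  also have "generator ?\<psi> N \<eta> \<eta> = - (v * real N * (real (cl N \<eta>) - 1))"
    unfolding generator_def using out_rate[OF v eta] by simp
  also have "(\<Sum>\<xi>\<in>Omega N - {\<eta>}. f \<xi> * generator ?\<psi> N \<xi> \<eta>) = (\<Sum>\<xi>\<in>Omega N - {\<eta>}. f \<xi> * jump_rate ?\<psi> N \<xi> \<eta>)"
    by (intro sum.cong refl) (auto simp: generator_def)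
  also have "\<dots> = (\<Sum>\<xi>\<in>Omega N - {\<eta>}. \<Sum>p\<in>size_pairs N. f \<xi> * (case p of (i,j) \<Rightarrow> if merge \<xi> i j = \<eta> then pair_rate ?\<psi> \<xi> i j else 0))"
    unfolding jump_rate_def by (simp add: sum_distrib_left)
  also have "\<dots> = (\<Sum>p\<in>size_pairs N. \<Sum>\<xi>\<in>Omega N - {\<eta>}. f \<xi> * (case p of (i,j) \<Rightarrow> if merge \<xi> i j = \<eta> then pair_rate ?\<psi> \<xi> i j else 0))"
    by (rule sum.swap)
  also have "\<dots> = (\<Sum>(i,j)\<in>size_pairs N. if 1 \<le> \<eta> (i + j) then f (splt \<eta> i j) * pair_rate ?\<psi> (splt \<eta> i j) i j else 0)"
  proof (rule sum.cong[OF refl])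
    fix p assume p: "p \<in> size_pairs N"
    obtain i j where ij: "p = (i, j)" by (cases p)
    show "(\<Sum>\<xi>\<in>Omega N - {\<eta>}. f \<xi> * (case p of (i,j) \<Rightarrow> if merge \<xi> i j = \<eta> then pair_rate ?\<psi> \<xi> i j else 0))
        = (case p of (i,j) \<Rightarrow> if 1 \<le> \<eta> (i + j) then f (splt \<eta> i j) * pair_rate ?\<psi> (splt \<eta> i j) i j else 0)"
      using in_sum[OF v eta p[unfolded ij], of f] ij by simp
  qed
  finally show ?thesis .
qed


lemma deriv_gen:
  fixes C A B t :: real
  shows "((\<lambda>s. C * (exp (A * s) * (1 - exp (B * s)) ^ m)) has_real_derivative
     C * (exp (A * t) * A * (1 - exp (B * t)) ^ m + exp (A * t) * (real m * (1 - exp (B * t)) ^ (m - 1) * (- B * exp (B * t))))) (at t)"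
  by (auto intro!: derivative_eq_intros simp: algebra_simps)

lemma qf_alt:
  "qf v N s \<eta> = (fact N / real N ^ (N - cl N \<eta>) * W N \<eta>) *
     (exp ((- real N * real (cl N \<eta> - 1) * v) * s) * (1 - exp ((- real N * v) * s)) ^ (N - cl N \<eta>))"
  unfolding qf_def by (simp add: field_simps)


lemma qf_deriv:
  assumes v: "v > 0" and N: "N \<ge> 1" and eta: "\<eta> \<in> Omega N"
  shows "((\<lambda>s. qf v N s \<eta>) has_real_derivative
           (\<Sum>\<xi>\<in>Omega N. qf v N t \<xi> * generator (\<lambda>i j. real (i + j) * v) N \<xi> \<eta>)) (at t within {0..})"
proof -
  let ?pr = "pair_rate (\<lambda>i j. real (i + j) * v)"
  define r where "r = cl N \<eta>"
  have r1: "1 \<le> r" "r \<le> N" unfolding r_def using cl_ge[OF eta N] cl_le[OF eta] by auto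
  define C where "C = fact N / real N ^ (N - r) * W N \<eta>"
  define A where "A = - real N * real (r - 1) * v"
  define B where "B = - real N * v"
  define m where "m = N - r"
  define X where "X = exp (A * t)"
  define E where "E = exp (B * t)"
  define Y where "Y = 1 - E"
  have D: "((\<lambda>s. qf v N s \<eta>) has_real_derivative
      C * (X * A * Y ^ m + X * (real m * Y ^ (m - 1) * (- B * E)))) (at t)"
    unfolding C_def A_def B_def m_def r_def qf_alt X_def Y_def E_def by (rule deriv_gen)
  define K where "K = fact N * exp (- real N * real r * v * t) * (1 - exp (- real N * v * t)) ^ (N - (r + 1)) / real N ^ (N - (r + 1))"
  have qs: "qf v N t (splt \<eta> i j) = K * W N (splt \<eta> i j)" if ij: "(i, j) \<in> size_pairs N" "1 \<le> \<eta> (i + j)" for i j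
  proof -
    have ij1: "1 \<le> i" "1 \<le> j" "i + j \<le> N" using ij by (auto simp: size_pairs_def)
    note dc = delta_change[OF eta ij1, of "splt \<eta> i j" "-1", OF splt_int[of i j \<eta>, OF ij1(1,2) ij(2)]]
    have "cl N (splt \<eta> i j) = r + 1" using dc(2) unfolding r_def by simp
    then show ?thesis unfolding qf_def K_def by simp
  qed
  have S: "(\<Sum>(i,j)\<in>size_pairs N. if 1 \<le> \<eta> (i + j) then qf v N t (splt \<eta> i j) * ?pr (splt \<eta> i j) i j else 0)
      = K * (v * (real N - real r) * W N \<eta>)"
  proof -
    have "(\<Sum>(i,j)\<in>size_pairs N. if 1 \<le> \<eta> (i + j) then qf v N t (splt \<eta> i j) * ?pr (splt \<eta> i j) i j else 0)
       = (\<Sum>(i,j)\<in>size_pairs N. K * (if 1 \<le> \<eta> (i + j) then ?pr (splt \<eta> i j) i j * W N (splt \<eta> i j) else 0))"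
      by (intro sum.cong refl) (auto simp: qs)
    also have "\<dots> = K * (\<Sum>(i,j)\<in>size_pairs N. if 1 \<le> \<eta> (i + j) then ?pr (splt \<eta> i j) i j * W N (splt \<eta> i j) else 0)"
      by (simp add: sum_distrib_left case_prod_unfold)
    also have "\<dots> = K * (v * (real N - real r) * W N \<eta>)"
      unfolding r_def by (subst core[OF eta]) simp
    finally show ?thesis .
  qed
  have G: "(\<Sum>\<xi>\<in>Omega N. qf v N t \<xi> * generator (\<lambda>i j. real (i + j) * v) N \<xi> \<eta>)
      = qf v N t \<eta> * (- (v * real N * (real r - 1))) + K * (v * (real N - real r) * W N \<eta>)"
    using gen_sum[OF v eta, of "qf v N t"] S unfolding r_def by simp
  have qe: "qf v N t \<eta> = C * (X * Y ^ m)"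
    unfolding qf_alt C_def X_def Y_def E_def A_def B_def m_def r_def ..
  have eq: "C * (X * A * Y ^ m + X * (real m * Y ^ (m - 1) * (- B * E)))
      = qf v N t \<eta> * (- (v * real N * (real r - 1))) + K * (v * (real N - real r) * W N \<eta>)"
  proof (cases "m = 0")
    case True
    then have "r = N" unfolding m_def using r1 by simp
    then show ?thesis unfolding qe A_def using True r1 by (simp add: of_nat_diff algebra_simps)
  next
    case False
    then obtain m' where m': "m = Suc m'" by (cases m) auto
    have Nm: "N - (r + 1) = m'" using m' unfolding m_def by simp
    have XE: "exp (- real N * real r * v * t) = X * E"
      unfolding X_def E_def A_def B_def using r1 by (simp add: exp_add[symmetric] of_nat_diff algebra_simps)
    have K': "K = fact N * (X * E) * Y ^ m' / real N ^ m'"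
      unfolding K_def XE Nm Y_def E_def B_def ..
    have C': "C = fact N / (real N * real N ^ m') * W N \<eta>"
      unfolding C_def m_def[symmetric] m' by simp
    have rr: "real N - real r = real (Suc m')" using m' r1 unfolding m_def by (simp add: of_nat_diff)
    have Npos: "real N > 0" using N by simp
    show ?thesis unfolding qe K' C' m' rr A_def B_def using Npos r1
      by (simp add: field_simps of_nat_diff)
  qed
  show ?thesis
    using has_field_derivative_at_within[OF D] unfolding eq G .
qed


lemma mono_in: "N \<ge> 1 \<Longrightarrow> monodisperse N \<in> Omega N"
  unfolding Omega_def monodisperse_def by (auto simp: if_distrib cong: if_cong)

lemma cl_mono: "N \<ge> 1 \<Longrightarrow> cl N (monodisperse N) = N"
  unfolding cl_def monodisperse_def by simp

lemma clN_mono: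
  assumes eta: "\<eta> \<in> Omega N" and c: "cl N \<eta> = N"
  shows "\<eta> = monodisperse N"
proof -
  have "(\<Sum>k=1..N. k * \<eta> k) = (\<Sum>k=1..N. (k - 1) * \<eta> k + \<eta> k)"
  proof (intro sum.cong refl)
    fix x assume x: "x \<in> {1..N}"
    show "x * \<eta> x = (x - 1) * \<eta> x + \<eta> x" using x by (cases x) simp_all
  qed
  also have "\<dots> = (\<Sum>k=1..N. (k - 1) * \<eta> k) + cl N \<eta>"
    by (simp add: sum.distrib cl_def)
  finally have "(\<Sum>k=1..N. (k - 1) * \<eta> k) = 0" using Omega_sum[OF eta] c by simp
  then have z: "\<forall>k\<in>{1..N}. (k - 1) * \<eta> k = 0" by (simp add: sum_eq_0_iff)
  have z2: "\<eta> k = 0" if "2 \<le> k" "k \<le> N" for k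
    using bspec[OF z, of k] that by auto
  have "N = cl N \<eta>" using c by simp
  also have "cl N \<eta> = \<eta> 1 + (\<Sum>k=2..N. \<eta> k)"
  proof (cases "N \<ge> 1")
    case True
    then show ?thesis unfolding cl_def by (subst sum.atLeast_Suc_atMost) (simp_all add: numeral_2_eq_2)
  next
    case False then show ?thesis unfolding cl_def using Omega_zero[OF eta, of 1] by simp
  qed
  also have "(\<Sum>k=2..N. \<eta> k) = 0" using z2 by simp
  finally have e1: "\<eta> 1 = N" by simp
  show ?thesis
  proof
    fix k
    show "\<eta> k = monodisperse N k"
    proof (cases "k = 1")
      case True then show ?thesis using e1 by (simp add: monodisperse_def)
    next
      case False
      then have "k < 1 \<or> k > N \<or> (2 \<le> k \<and> k \<le> N)" by auto
      then have "\<eta> k = 0" using Omega_zero[OF eta, of k] z2 by auto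
      then show ?thesis using False by (simp add: monodisperse_def)
    qed
  qed
qed

lemma W_mono:
  assumes N: "N \<ge> 1"
  shows "W N (monodisperse N) = 1 / fact N"
proof -
  have "W N (monodisperse N) = w (monodisperse N) 1 * (\<Prod>m=2..N. w (monodisperse N) m)"
    unfolding W_def using N by (subst prod.atLeast_Suc_atMost) (simp_all add: numeral_2_eq_2)
  also have "(\<Prod>m=2..N. w (monodisperse N) m) = 1"
    by (intro prod.neutral) (auto simp: w_def monodisperse_def)
  also have "w (monodisperse N) 1 = 1 / fact N"
    by (simp add: w_def monodisperse_def aa_def)
  finally show ?thesis by simp
qed

lemma qf_init:
  assumes N: "N \<ge> 1" and eta: "\<eta> \<in> Omega N"
  shows "qf v N 0 \<eta> = (if \<eta> = monodisperse N then 1 else 0)"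
proof (cases "\<eta> = monodisperse N")
  case True
  then show ?thesis unfolding qf_def using cl_mono[OF N] W_mono[OF N] by simp
next
  case False
  then have "cl N \<eta> \<noteq> N" using clN_mono[OF eta] by auto
  then have "cl N \<eta> < N" using cl_le[OF eta] by simp
  then show ?thesis unfolding qf_def using False by simp
qed

lemma W_formula:
  "W N \<eta> = (\<Prod>k=1..N. real k ^ ((k - 1) * \<eta> k) / (fact k ^ \<eta> k * fact (\<eta> k)))"
  unfolding W_def w_def aa_def
  by (intro prod.cong refl) (simp add: power_divide power_mult)

theorem mainTheorem4:
  fixes v :: real and N :: nat and p :: "real \<Rightarrow> (nat \<Rightarrow> nat) \<Rightarrow> real"
  assumes "v > 0" and "N \<ge> 1"
    and "is_law (\<lambda>i j. real (i + j) * v) N (monodisperse N) p"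
  shows "\<forall>t\<ge>0. \<forall>r\<in>{1..N}. \<forall>\<eta>\<in>Omega_r r N.
           p t \<eta> = fact N * exp (- real N * real (r - 1) * v * t)
                     * (1 - exp (- real N * v * t)) ^ (N - r) / real N ^ (N - r)
                     * (\<Prod>k=1..N. real k ^ ((k - 1) * \<eta> k) / (fact k ^ \<eta> k * fact (\<eta> k)))"
proof (intro allI impI ballI)
  fix t :: real and r \<eta> assume t: "t \<ge> 0" and r: "r \<in> {1..N}" and eta: "\<eta> \<in> Omega_r r N"
  have etaO: "\<eta> \<in> Omega N" and cr: "cl N \<eta> = r" using eta unfolding Omega_r_def cl_def by auto
  have law: "\<forall>\<eta>\<in>Omega N. p 0 \<eta> = (if \<eta> = monodisperse N then 1 else 0)"
     "\<forall>\<eta>\<in>Omega N. \<forall>t\<ge>0. ((\<lambda>s. p s \<eta>) has_real_derivative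
        (\<Sum>\<xi>\<in>Omega N. p t \<xi> * generator (\<lambda>i j. real (i + j) * v) N \<xi> \<eta>)) (at t within {0..})"
    using assms(3) unfolding is_law_def by auto
  have U: "\<forall>t\<ge>0. \<forall>\<eta>\<in>Omega N. p t \<eta> = qf v N t \<eta>"
  proof (rule ode_unique[OF finite_Omega])
    show "\<forall>\<eta>\<in>Omega N. p 0 \<eta> = qf v N 0 \<eta>" using law(1) qf_init[OF assms(2)] by simp
    show "\<forall>\<eta>\<in>Omega N. \<forall>t\<ge>0. ((\<lambda>s. p s \<eta>) has_real_derivative
        (\<Sum>\<xi>\<in>Omega N. p t \<xi> * generator (\<lambda>i j. real (i + j) * v) N \<xi> \<eta>)) (at t within {0..})"
      by (rule law(2))
    show "\<forall>\<eta>\<in>Omega N. \<forall>t\<ge>0. ((\<lambda>s. qf v N s \<eta>) has_real_derivative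
        (\<Sum>\<xi>\<in>Omega N. qf v N t \<xi> * generator (\<lambda>i j. real (i + j) * v) N \<xi> \<eta>)) (at t within {0..})"
      using qf_deriv[OF assms(1,2)] by blast
  qed
  have "p t \<eta> = qf v N t \<eta>" using U t etaO by blast
  then show "p t \<eta> = fact N * exp (- real N * real (r - 1) * v * t)
                     * (1 - exp (- real N * v * t)) ^ (N - r) / real N ^ (N - r)
                     * (\<Prod>k=1..N. real k ^ ((k - 1) * \<eta> k) / (fact k ^ \<eta> k * fact (\<eta> k)))"
    unfolding qf_def cr W_formula .
qed


end
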